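(* For each integer $q$ there exists a subset $\mathscr{N}_q\subset\{2,3,\dots,q-1\}$ such that, as $q\to\infty$, $$\#\mathscr{N}_q=q+O\!\left(\frac{q}{\log_2 q}\right),$$ where the implied constant is less than $1$, and, provided $k=k(q)$ is a positive integer satisfying $k=o(\sqrt{\log_2 q})$, $$\#\{\mathscr{S}\in\mathscr{N}_q^{[k]}:\ \mathscr{S}\text{ is multiplicatively independent}\}=\binom{\#\mathscr{N}_q}{k}+O\big((\#\mathscr{N}_q)^{k-3/2+o(1)}\big)=\frac{q^k}{k!}+O\!\left(\frac{q^k}{(k-1)!\,\log_2 q}\right).$$
   Context: For a set $\mathscr{A}$ and $k\in\mathbb{N}$, $\mathscr{A}^{[k]}$ denotes the set of $k$-element subsets of $\mathscr{A}$. Positive integers $n_1,\dots,n_r$ are multiplicatively independent if $\alpha_1=\dots=\alpha_r=0$ is the only integer solution of $n_1^{\alpha_1}\cdots n_r^{\alpha_r}=1$; a set is multiplicatively independent if its elements are. $\log x:=\max\{\ln x,2\}$ and $\log_2 x=\log\log x$. *)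

theory Defs
  imports Complex_Main "HOL-Library.Landau_Symbols"
begin

text \<open>The paper's truncated logarithm: log x = max (ln x) 2, and log_2 x = log (log x).\<close>
definition Log :: "real \<Rightarrow> real" where
  "Log x = max (ln x) 2"

definition Log2 :: "real \<Rightarrow> real" where
  "Log2 x = Log (Log x)"

definition mult_indep :: "nat set \<Rightarrow> bool" where
  "mult_indep S \<longleftrightarrow>
     (\<forall>\<alpha> :: nat \<Rightarrow> int. (\<Prod>n\<in>S. (real n) powi (\<alpha> n)) = 1 \<longrightarrow> (\<forall>n\<in>S. \<alpha> n = 0))"

end

theory Submission
  imports Defs "HOL-Computational_Algebra.Squarefree" "HOL-Computational_Algebra.Nth_Powers" "HOL-Real_Asymp.Real_Asymp"
begin


definition dc :: "nat \<Rightarrow> nat" where "dc n = card {d. d dvd n}"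

lemma dc_le_primepow:
  assumes p: "prime p" and m: "m > 0"
  shows "dc (p^e * m) \<le> Suc e * dc m"
proof -
  have "{d. d dvd p^e*m} \<subseteq> (\<lambda>(i,d). p^i*d) ` ({..e} \<times> {d. d dvd m})"
  proof
    fix D assume "D \<in> {d. d dvd p^e*m}"
    then obtain a b where ab: "D = a*b" "a dvd p^e" "b dvd m" using division_decomp by blast
    then obtain i where "i \<le> e" "a = p^i" using divides_primepow_nat[OF p] by auto
    thus "D \<in> (\<lambda>(i,d). p^i*d) ` ({..e} \<times> {d. d dvd m})" using ab by force
  qed
  hence "dc (p^e*m) \<le> card ((\<lambda>(i,d). p^i*d) ` ({..e} \<times> {d. d dvd m}))"
    unfolding dc_def by (intro card_mono finite_imageI finite_cartesian_product) (use m in auto)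
  also have "\<dots> \<le> card ({..e} \<times> {d. d dvd m})" by (rule card_image_le) (use m in auto)
  also have "\<dots> = Suc e * dc m" by (simp add: dc_def card_cartesian_product)
  finally show ?thesis .
qed

lemma ln2_ge_half: "ln (2::real) \<ge> 1/2"
proof -
  have "exp (1/2::real) * exp (1/2) = exp 1" by (simp add: exp_add[symmetric])
  hence "exp (1/2::real) \<le> 2"
  proof -
    assume h: "exp (1/2::real) * exp (1/2) = exp 1"
    show ?thesis
    proof (rule ccontr)
      assume "\<not> exp (1/2::real) \<le> 2"
      hence "exp (1/2::real) * exp (1/2) > 2 * 2" by (intro mult_strict_mono) auto
      with h exp_le show False by simp
    qed
  qed
  thus ?thesis by (subst ln_ge_iff) auto
qed

lemma exp_ge_helper:
  fixes e :: nat and \<delta> :: real and p :: nat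
  assumes "0 < \<delta>" "\<delta> \<le> 1" "p \<ge> 2"
  shows "real (Suc e) \<le> (2/\<delta>) * real p powr (real e * \<delta>)"
proof -
  have "real p powr (real e * \<delta>) \<ge> 2 powr (real e * \<delta>)"
    using assms by (intro powr_mono2) auto
  also have "2 powr (real e * \<delta>) = exp (real e * \<delta> * ln 2)" by (simp add: powr_def)
  also have "\<dots> \<ge> 1 + real e * \<delta> * ln 2" by (rule exp_ge_add_one_self)
  finally have *: "real p powr (real e * \<delta>) \<ge> 1 + real e * \<delta> * ln 2" .
  have "ln (2::real) \<ge> 1/2" by (rule ln2_ge_half)
  hence "real e * \<delta> * ln 2 \<ge> real e * \<delta> * (1/2)" using assms by (intro mult_left_mono) auto
  hence "real e * \<delta> * ln 2 \<ge> real e * \<delta> / 2" by simp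
  with * have "(2/\<delta>) * real p powr (real e * \<delta>) \<ge> (2/\<delta>) * (1 + real e * \<delta> / 2)"
    using assms by (intro mult_left_mono) auto
  also have "(2/\<delta>) * (1 + real e * \<delta> / 2) = 2/\<delta> + real e" using assms by (simp add: field_simps)
  finally have "2/\<delta> + real e \<le> (2/\<delta>) * real p powr (real e * \<delta>)" .
  moreover have "1 \<le> 2/\<delta>" using assms by (simp add: field_simps)
  ultimately show ?thesis by simp
qed

lemma exp_ge_helper2:
  fixes e :: nat and \<delta> :: real and p :: nat
  assumes "0 < \<delta>" "real p \<ge> 2 powr (1/\<delta>)"
  shows "real (Suc e) \<le> real p powr (real e * \<delta>)"
proof -
  have "real p powr \<delta> \<ge> (2 powr (1/\<delta>)) powr \<delta>" using assms by (intro powr_mono2) auto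
  also have "(2 powr (1/\<delta>)) powr \<delta> = 2" using assms by (simp add: powr_powr)
  finally have "real p powr \<delta> \<ge> 2" .
  hence "(real p powr \<delta>) ^ e \<ge> 2 ^ e" by (intro power_mono) auto
  moreover have "(real p powr \<delta>) ^ e = real p powr (real e * \<delta>)"
  proof -
    have "0 < real p" using assms(2) by (smt (verit) powr_gt_zero)
    thus ?thesis by (subst powr_realpow[symmetric]) (auto simp: powr_powr mult.commute)
  qed
  moreover have "real (Suc e) \<le> 2 ^ e"
  proof -
    have "Suc e \<le> 2 ^ e" by (induction e) auto
    thus ?thesis using of_nat_le_iff[of "Suc e" "2^e", where 'a=real] by simp
  qed
  ultimately show ?thesis by linarith
qed

definition smallp :: "real \<Rightarrow> nat \<Rightarrow> nat set" where
  "smallp B n = {p. prime p \<and> p dvd n \<and> real p < B}"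

lemma smallp_sub: "n > 0 \<Longrightarrow> smallp B n \<subseteq> {..n}"
  by (auto simp: smallp_def dest: dvd_imp_le)

lemma smallp_sub2: "smallp B n \<subseteq> {..<nat \<lceil>B\<rceil>}"
  by (auto simp: smallp_def) linarith

lemma dc_bound_aux:
  fixes \<delta> :: real assumes d: "0 < \<delta>" "\<delta> \<le> 1"
  shows "n > 0 \<Longrightarrow> real (dc n) \<le> real n powr \<delta> * (2/\<delta>) ^ card (smallp (2 powr (1/\<delta>)) n)"
proof (induction n rule: less_induct)
  case (less n)
  define B where "B = (2::real) powr (1/\<delta>)"
  show ?case
  proof (cases "n = 1")
    case True
    have "{d. d dvd (1::nat)} = {1}" by auto
    moreover have "smallp B 1 = {}" by (auto simp: smallp_def)
    ultimately show ?thesis using True by (simp add: dc_def B_def)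
  next
    case False
    with less.prems have "n > 1" by auto
    obtain p where p: "prime p" "p dvd n" using prime_factor_nat[of n] \<open>n>1\<close> by auto
    define e where "e = multiplicity p n"
    have "n \<noteq> 0" "\<not> is_unit p" using less.prems p(1) by (auto simp: not_prime_unit)
    then obtain m where nm: "n = p^e * m" "\<not> p dvd m" using multiplicity_decompose'[of n p] unfolding e_def by metis
    have "e > 0" using nm p(2) by (cases e) auto
    have "m > 0" using nm less.prems by (cases m) auto
    have "p \<ge> 2" using p by (simp add: prime_ge_2_nat)
    have "p^e \<ge> p^1" by (rule power_increasing) (use \<open>e>0\<close> \<open>p\<ge>2\<close> in auto)
    hence "p^e \<ge> 2" using \<open>p\<ge>2\<close> by simp
    hence "n \<ge> 2*m" using nm by simp
    hence "m < n" using \<open>m>0\<close> by linarith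
    have IH: "real (dc m) \<le> real m powr \<delta> * (2/\<delta>) ^ card (smallp B m)"
      using less.IH[OF \<open>m < n\<close> \<open>m > 0\<close>] by (simp add: B_def)
    have dcn: "real (dc n) \<le> real (Suc e) * real (dc m)"
      using dc_le_primepow[OF p(1) \<open>m>0\<close>, of e] nm by (metis of_nat_le_iff of_nat_mult)
    have "real p > 0" using \<open>p \<ge> 2\<close> by simp
    have npow: "real n powr \<delta> = real p powr (real e * \<delta>) * real m powr \<delta>"
    proof -
      have "real n = real p ^ e * real m" using nm by simp
      hence "real n powr \<delta> = (real p ^ e) powr \<delta> * real m powr \<delta>"
        by (simp add: powr_mult)
      also have "(real p ^ e) powr \<delta> = real p powr (real e * \<delta>)"
        using \<open>real p > 0\<close> by (simp add: powr_realpow[symmetric] powr_powr)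
      finally show ?thesis .
    qed
    have pm: "p \<notin> smallp B m" using nm by (simp add: smallp_def)
    have fin: "finite (smallp B m)" using smallp_sub[OF \<open>m>0\<close>] finite_subset by blast
    have spn: "smallp B n = (if real p < B then insert p (smallp B m) else smallp B m)"
    proof -
      have "\<And>r. prime r \<Longrightarrow> r dvd n \<longleftrightarrow> r = p \<or> r dvd m"
        using nm p \<open>e > 0\<close> by (auto simp: prime_dvd_mult_iff prime_dvd_power_iff primes_dvd_imp_eq)
      thus ?thesis unfolding smallp_def using p by auto
    qed
    have Apos: "(2/\<delta>) \<ge> 0" using d by simp
    have IH': "real (Suc e) * real (dc m) \<le> real (Suc e) * (real m powr \<delta> * (2/\<delta>) ^ card (smallp B m))"
      using IH by (intro mult_left_mono) auto
    show ?thesis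
    proof (cases "real p < B")
      case True
      have c: "card (smallp B n) = Suc (card (smallp B m))" using spn True pm fin by simp
      have "real (Suc e) \<le> (2/\<delta>) * real p powr (real e * \<delta>)"
        using exp_ge_helper[OF d \<open>p\<ge>2\<close>] .
      hence "real (Suc e) * (real m powr \<delta> * (2/\<delta>) ^ card (smallp B m)) \<le>
             ((2/\<delta>) * real p powr (real e * \<delta>)) * (real m powr \<delta> * (2/\<delta>) ^ card (smallp B m))"
        using Apos by (intro mult_right_mono) auto
      also have "\<dots> = real n powr \<delta> * (2/\<delta>) ^ card (smallp B n)"
        using npow c by (simp add: algebra_simps)
      finally show ?thesis unfolding B_def[symmetric] using dcn IH' by linarith
    next
      case False
      have c: "card (smallp B n) = card (smallp B m)" using spn False by simp
      have "real (Suc e) \<le> real p powr (real e * \<delta>)"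
        using exp_ge_helper2[OF d(1)] False B_def by simp
      hence "real (Suc e) * (real m powr \<delta> * (2/\<delta>) ^ card (smallp B m)) \<le>
             (real p powr (real e * \<delta>)) * (real m powr \<delta> * (2/\<delta>) ^ card (smallp B m))"
        using Apos by (intro mult_right_mono) auto
      also have "\<dots> = real n powr \<delta> * (2/\<delta>) ^ card (smallp B n)"
        using npow c by (simp add: algebra_simps)
      finally show ?thesis unfolding B_def[symmetric] using dcn IH' by linarith
    qed
  qed
qed

lemma dc_bound:
  fixes \<delta> :: real assumes d: "0 < \<delta>" "\<delta> \<le> 1" and n: "n > 0"
  shows "real (dc n) \<le> real n powr \<delta> * (2/\<delta>) powr (2 powr (1/\<delta>) + 1)"
proof -
  define B where "B = (2::real) powr (1/\<delta>)"
  have "card (smallp B n) \<le> card {..<nat \<lceil>B\<rceil>}" by (intro card_mono smallp_sub2) auto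
  moreover have "B > 0" by (simp add: B_def)
  ultimately have c: "real (card (smallp B n)) \<le> B + 1" using of_int_ceiling_le_add_one[of B]
    by (smt (verit, best) card_lessThan of_nat_le_iff of_nat_nat ceiling_le_zero)
  have A1: "(2/\<delta>) \<ge> 1" using d by (simp add: field_simps)
  have "(2/\<delta>) ^ card (smallp B n) = (2/\<delta>) powr real (card (smallp B n))"
    using A1 d by (subst powr_realpow) auto
  also have "\<dots> \<le> (2/\<delta>) powr (B + 1)" using A1 c by (intro powr_mono) auto
  finally have "(2/\<delta>) ^ card (smallp B n) \<le> (2/\<delta>) powr (B + 1)" .
  hence "real n powr \<delta> * (2/\<delta>) ^ card (smallp B n) \<le> real n powr \<delta> * (2/\<delta>) powr (B + 1)"
    by (intro mult_left_mono) auto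
  with dc_bound_aux[OF d n] show ?thesis by (simp add: B_def)
qed



lemma powerful_sqf_dvd:
  fixes N :: nat
  assumes N: "N > 0" and pw: "\<And>p. prime p \<Longrightarrow> p dvd N \<Longrightarrow> p^2 dvd N"
  shows "squarefree_part N dvd square_part N"
proof -
  have "\<forall>p. prime p \<longrightarrow> multiplicity p (squarefree_part N) \<le> multiplicity p (square_part N)"
  proof (intro allI impI)
    fix p :: nat assume p: "prime p"
    define m where "m = multiplicity p N"
    have "m = 0 \<or> m \<ge> 2"
    proof (cases "m = 0")
      case False
      hence "p dvd N" using p N unfolding m_def
        by (metis not_dvd_imp_multiplicity_0)
      hence "p^2 dvd N" using pw p by auto
      hence "2 \<le> m" unfolding m_def using N p
        by (metis less_numeral_extra(3) not_prime_unit power_dvd_iff_le_multiplicity)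
      thus ?thesis by auto
    qed auto
    hence "m mod 2 \<le> m div 2" by auto
    thus "multiplicity p (squarefree_part N) \<le> multiplicity p (square_part N)"
      using p by (simp add: prime_multiplicity_squarefree_part prime_multiplicity_square_part m_def)
  qed
  moreover have "square_part N \<noteq> 0" using N by simp
  ultimately show ?thesis
    by (subst prime_multiplicity_le_imp_dvd) auto
qed

lemma pow_eq_common_base:
  fixes a b x y :: nat
  assumes ab: "a \<ge> 2" "b \<ge> 2" "a \<noteq> b" and xy: "x > 0" "y > 0" and eq: "a^x = b^y"
  shows "\<exists>c i j. c \<ge> 2 \<and> a = c^i \<and> b = c^j \<and> i \<ge> 1 \<and> j \<ge> 1 \<and> i \<noteq> j"
proof -
  define g where "g = gcd x y"
  define x' where "x' = x div g"
  define y' where "y' = y div g"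
  have g: "g > 0" using xy by (simp add: g_def)
  have xx: "x = g * x'" "y = g * y'" by (simp_all add: g_def x'_def y'_def)
  have "x' > 0" "y' > 0" using xy xx by auto
  have cop: "coprime x' y'" unfolding x'_def y'_def g_def using xy by (intro div_gcd_coprime) auto
  have "(a^x')^g = (b^y')^g" using eq xx by (simp add: power_mult[symmetric] mult.commute)
  hence e1: "a^x' = b^y'" using power_eq_imp_eq_base[of "a^x'" g "b^y'"] g by simp
  have "is_nth_power x' b"
    unfolding is_nth_power_conv_multiplicity_nat[OF \<open>x'>0\<close>]
  proof (intro allI impI)
    fix p :: nat assume p: "prime p"
    have a0: "a \<noteq> 0" "b \<noteq> 0" using ab by auto
    have "multiplicity p (a^x') = x' * multiplicity p a"
      by (rule prime_elem_multiplicity_power_distrib) (use p a0 in auto)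
    moreover have "multiplicity p (b^y') = y' * multiplicity p b"
      by (rule prime_elem_multiplicity_power_distrib) (use p a0 in auto)
    ultimately have "x' * multiplicity p a = y' * multiplicity p b" using e1 by simp
    hence "x' dvd y' * multiplicity p b" by (metis dvd_triv_left)
    thus "x' dvd multiplicity p b" using cop by (simp add: coprime_dvd_mult_right_iff)
  qed
  then obtain c where c: "b = c^x'" by (auto elim: is_nth_powerE)
  have "a^x' = (c^y')^x'" using e1 c by (simp add: power_mult[symmetric] mult.commute)
  hence ac: "a = c^y'" using power_eq_imp_eq_base[of a x' "c^y'"] \<open>x'>0\<close> by simp
  have "c \<noteq> 0" using c ab \<open>x'>0\<close> by (cases "c = 0") (auto simp: power_0_left)
  moreover have "c \<noteq> 1" using c ab by auto
  ultimately have "c \<ge> 2" by auto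
  moreover have "y' \<noteq> x'" using ac c ab by auto
  ultimately show ?thesis using ac c \<open>x'>0\<close> \<open>y'>0\<close> by (intro exI[of _ c] exI[of _ y'] exI[of _ x']) auto
qed

definition rel :: "nat set \<Rightarrow> bool" where
  "rel T \<longleftrightarrow> (\<exists>P Ng xe ye. P \<inter> Ng = {} \<and> P \<union> Ng = T \<and> (\<forall>n\<in>P. xe n > (0::nat)) \<and>
      (\<forall>n\<in>Ng. ye n > (0::nat)) \<and> (\<Prod>n\<in>P. n^xe n) = (\<Prod>n\<in>Ng. n^ye n))"

lemma dep_rel:
  assumes S: "finite S" and dep: "\<not> mult_indep S"
  shows "\<exists>T \<subseteq> S. T \<noteq> {} \<and> rel T"
proof -
  obtain \<alpha> :: "nat \<Rightarrow> int" where al: "(\<Prod>n\<in>S. (real n) powi (\<alpha> n)) = 1" and n0: "\<exists>n\<in>S. \<alpha> n \<noteq> 0"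
    using dep unfolding mult_indep_def by auto
  define P where "P = {n\<in>S. \<alpha> n > 0}"
  define Ng where "Ng = {n\<in>S. \<alpha> n < 0}"
  define T where "T = P \<union> Ng"
  have fP: "finite P" "finite Ng" using S by (auto simp: P_def Ng_def)
  have z: "\<And>i. i \<in> S - T \<Longrightarrow> \<alpha> i = 0" by (auto simp: T_def P_def Ng_def)
  have TS: "T \<subseteq> S" by (auto simp: T_def P_def Ng_def)
  have "(\<Prod>n\<in>S. (real n) powi (\<alpha> n)) = (\<Prod>n\<in>T. (real n) powi (\<alpha> n))"
    by (rule prod.mono_neutral_right[OF S TS]) (simp add: z)
  also have "\<dots> = (\<Prod>n\<in>P. (real n) powi (\<alpha> n)) * (\<Prod>n\<in>Ng. (real n) powi (\<alpha> n))"
    unfolding T_def by (rule prod.union_disjoint[OF fP]) (auto simp: P_def Ng_def)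
  also have "(\<Prod>n\<in>P. (real n) powi (\<alpha> n)) = (\<Prod>n\<in>P. real n ^ nat (\<alpha> n))"
    by (rule prod.cong) (auto simp: P_def power_int_def)
  also have "(\<Prod>n\<in>Ng. (real n) powi (\<alpha> n)) = (\<Prod>n\<in>Ng. inverse (real n ^ nat (- \<alpha> n)))"
    by (rule prod.cong) (auto simp: Ng_def power_int_def power_inverse)
  also have "\<dots> = inverse (\<Prod>n\<in>Ng. real n ^ nat (- \<alpha> n))"
    using prod_inversef[of "\<lambda>n. real n ^ nat (- \<alpha> n)" Ng] by (simp add: comp_def)
  finally have eq0: "(\<Prod>n\<in>S. (real n) powi (\<alpha> n)) = (\<Prod>n\<in>P. real n ^ nat (\<alpha> n)) * inverse (\<Prod>n\<in>Ng. real n ^ nat (- \<alpha> n))" .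
  have eq: "(\<Prod>n\<in>P. real n ^ nat (\<alpha> n)) * inverse (\<Prod>n\<in>Ng. real n ^ nat (- \<alpha> n)) = 1"
    using eq0 unfolding al by (rule sym)
  have "(\<Prod>n\<in>Ng. real n ^ nat (- \<alpha> n)) \<noteq> 0"
  proof
    assume "(\<Prod>n\<in>Ng. real n ^ nat (- \<alpha> n)) = 0"
    hence "(\<Prod>n\<in>Ng. real n ^ nat (- \<alpha> n)) * 0 = 1" using eq by (simp add: mult.commute)
    thus False by simp
  qed
  hence "(\<Prod>n\<in>P. real n ^ nat (\<alpha> n)) = (\<Prod>n\<in>Ng. real n ^ nat (- \<alpha> n))"
  proof -
    assume nz: "(\<Prod>n\<in>Ng. real n ^ nat (- \<alpha> n)) \<noteq> 0"
    let ?x = "\<Prod>n\<in>P. real n ^ nat (\<alpha> n)" and ?y = "\<Prod>n\<in>Ng. real n ^ nat (- \<alpha> n)"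
    have "?x = ?x * inverse ?y * ?y" using nz by simp
    also have "\<dots> = ?y" using eq by simp
    finally show ?thesis .
  qed
  hence "real (\<Prod>n\<in>P. n ^ nat (\<alpha> n)) = real (\<Prod>n\<in>Ng. n ^ nat (- \<alpha> n))" by simp
  hence eqn: "(\<Prod>n\<in>P. n ^ nat (\<alpha> n)) = (\<Prod>n\<in>Ng. n ^ nat (- \<alpha> n))" by (simp only: of_nat_eq_iff)
  have "P \<inter> Ng = {}" "P \<union> Ng = T" "\<forall>n\<in>P. nat (\<alpha> n) > 0" "\<forall>n\<in>Ng. nat (- \<alpha> n) > 0"
    by (auto simp: T_def P_def Ng_def)
  hence "rel T" unfolding rel_def using eqn
    apply -
    apply (rule exI[of _ P], rule exI[of _ Ng], rule exI[of _ "\<lambda>n. nat (\<alpha> n)"], rule exI[of _ "\<lambda>n. nat (- \<alpha> n)"])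
    apply simp
    done
  moreover note TS
  moreover have "T \<noteq> {}"
  proof -
    obtain n where "n \<in> S" "\<alpha> n \<noteq> 0" using n0 by blast
    hence "n \<in> T" unfolding T_def P_def Ng_def by auto
    thus ?thesis by auto
  qed
  ultimately show ?thesis by blast
qed



definition shared :: "nat set \<Rightarrow> bool" where
  "shared T \<longleftrightarrow> (\<forall>n\<in>T. \<forall>p. prime p \<longrightarrow> p dvd n \<longrightarrow> (\<exists>m\<in>T. m \<noteq> n \<and> p dvd m))"

lemma rel_cross:
  assumes fin: "finite P" "finite Ng" and eq: "(\<Prod>n\<in>P. n^xe n) = (\<Prod>n\<in>Ng. n^ye n)"
    and xe: "\<forall>n\<in>P. xe n > (0::nat)" and n: "n \<in> P" and p: "prime p" "p dvd n"
  shows "\<exists>m\<in>Ng. p dvd (m::nat)"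
proof -
  have "n dvd n ^ xe n" using xe n by (intro dvd_power) auto
  hence "p dvd n ^ xe n" using p(2) by (rule dvd_trans[rotated])
  also have "n ^ xe n dvd (\<Prod>n\<in>P. n^xe n)" using dvd_prodI[OF fin(1) n, of "\<lambda>n. n^xe n"] by simp
  finally have "p dvd (\<Prod>n\<in>Ng. n^ye n)" using eq by simp
  then obtain m where "m \<in> Ng" "p dvd m ^ ye m" using prime_dvd_prod_iff[OF fin(2) p(1)] by auto
  thus ?thesis using p(1) prime_dvd_power by blast
qed

lemma rel_shared:
  assumes fin: "finite T" and r: "rel T"
  shows "shared T"
  unfolding shared_def
proof (intro ballI allI impI)
  fix n p assume n: "n \<in> T" and p: "prime p" "p dvd n"
  obtain P Ng xe ye where R: "P \<inter> Ng = {}" "P \<union> Ng = T" "\<forall>n\<in>P. xe n > (0::nat)"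
      "\<forall>n\<in>Ng. ye n > (0::nat)" "(\<Prod>n\<in>P. n^xe n) = (\<Prod>n\<in>Ng. n^ye n)"
    using r unfolding rel_def by blast
  have fP: "finite P" "finite Ng" using fin R(2) finite_subset[of P T] finite_subset[of Ng T] by auto
  show "\<exists>m\<in>T. m \<noteq> n \<and> p dvd m"
  proof (cases "n \<in> P")
    case True
    then obtain m where m: "m \<in> Ng" "p dvd m" using rel_cross[OF fP R(5) R(3) True p] by blast
    have "m \<noteq> n" using R(1) m(1) True by blast
    moreover have "m \<in> T" using R(2) m(1) by blast
    ultimately show ?thesis using m(2) by blast
  next
    case False
    hence "n \<in> Ng" using n R(2) by blast
    then obtain m where m: "m \<in> P" "p dvd m" using rel_cross[OF fP(2,1) R(5)[symmetric] R(4) _ p] by blast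
    have "m \<noteq> n" using R(1) m(1) \<open>n \<in> Ng\<close> by blast
    moreover have "m \<in> T" using R(2) m(1) by blast
    ultimately show ?thesis using m(2) by blast
  qed
qed

lemma part2:
  assumes "P \<inter> Ng = {}" "P \<union> Ng = {a,b}" "a \<in> P" "b \<in> Ng"
  shows "P = {a} \<and> Ng = {b}"
proof -
  have "P \<subseteq> {a}"
  proof
    fix x assume x: "x \<in> P"
    have "x \<in> {a,b}" using assms(2) x by blast
    moreover have "x \<noteq> b" using assms(1,4) x by blast
    ultimately show "x \<in> {a}" by simp
  qed
  moreover have "Ng \<subseteq> {b}"
  proof
    fix x assume x: "x \<in> Ng"
    have "x \<in> {a,b}" using assms(2) x by blast
    moreover have "x \<noteq> a" using assms(1,3) x by blast
    ultimately show "x \<in> {b}" by simp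
  qed
  ultimately show ?thesis using assms(3,4) by blast
qed

lemma rel_two:
  assumes r: "rel {a,b}" and ab: "a \<noteq> b" "a \<ge> 2" "b \<ge> (2::nat)"
  shows "\<exists>x y. x > 0 \<and> y > 0 \<and> a^x = b^y"
proof -
  obtain P Ng xe ye where R: "P \<inter> Ng = {}" "P \<union> Ng = {a,b}" "\<forall>n\<in>P. xe n > (0::nat)"
      "\<forall>n\<in>Ng. ye n > (0::nat)" "(\<Prod>n\<in>P. n^xe n) = (\<Prod>n\<in>Ng. n^ye n)"
    using r unfolding rel_def by blast
  have fP: "finite P" "finite Ng" using R(2) finite_subset[of P "{a,b}"] finite_subset[of Ng "{a,b}"] by auto
  obtain p where p: "prime p" "p dvd a" using prime_factor_nat[of a] ab by auto
  show ?thesis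
  proof (cases "a \<in> P")
    case True
    then obtain m where m: "m \<in> Ng" "p dvd m" using rel_cross[OF fP R(5) R(3) True p] by blast
    have "m \<in> {a,b}" using R(2) m(1) by blast
    moreover have "m \<noteq> a" using R(1) m(1) True by blast
    ultimately have "m = b" by blast
    have "b \<in> Ng" using m \<open>m = b\<close> by simp
    have PN: "P = {a}" "Ng = {b}" using part2[OF R(1,2) True \<open>b \<in> Ng\<close>] by auto
    thus ?thesis using R(3,4,5) by (intro exI[of _ "xe a"] exI[of _ "ye b"]) auto
  next
    case False
    hence aN: "a \<in> Ng" using R(2) by blast
    then obtain m where m: "m \<in> P" "p dvd m" using rel_cross[OF fP(2,1) R(5)[symmetric] R(4) aN p] by blast
    have "m \<in> {a,b}" using R(2) m(1) by blast
    moreover have "m \<noteq> a" using R(1) m(1) aN by blast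
    ultimately have "m = b" by blast
    have "b \<in> P" using m \<open>m = b\<close> by simp
    have PN: "P = {b}" "Ng = {a}" using part2[of P Ng b a] R(1,2) aN \<open>b \<in> P\<close> by (auto simp: insert_commute)
    thus ?thesis using R(3,4,5) by (intro exI[of _ "ye a"] exI[of _ "xe b"]) auto
  qed
qed

lemma shared_powerful:
  assumes fin: "finite T" and sh: "shared T" and p: "prime p" and d: "p dvd \<Prod>T"
  shows "p^2 dvd \<Prod>T"
proof -
  obtain n where n: "n \<in> T" "p dvd n" using prime_dvd_prod_iff[OF fin p] d by auto
  then obtain m where m: "m \<in> T" "m \<noteq> n" "p dvd m" using sh p unfolding shared_def by blast
  have "p^2 dvd n * m" using n m by (simp add: power2_eq_square mult_dvd_mono)
  also have "n * m = \<Prod>{n,m}" using m by simp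
  also have "\<Prod>{n,m} dvd \<Prod>T" using fin n m by (intro prod_dvd_prod_subset) auto
  finally show ?thesis .
qed

lemma shared_card_ge2:
  assumes "shared T" "T \<noteq> {}" "\<forall>n\<in>T. n \<ge> (2::nat)" "finite T"
  shows "card T \<ge> 2"
proof -
  obtain n where n: "n \<in> T" using assms by auto
  have "n \<noteq> 1" using assms n by auto
  then obtain p where p: "prime p" "p dvd n" using prime_factor_nat[of n] by blast
  obtain m where "m \<in> T" "m \<noteq> n" using assms(1) n p unfolding shared_def by blast
  hence "{n,m} \<subseteq> T" using n by auto
  hence "card {n,m} \<le> card T" using assms by (intro card_mono) auto
  thus ?thesis using \<open>m\<noteq>n\<close> by simp
qed



definition G2 :: "nat \<Rightarrow> nat set set" where
  "G2 q = {T. T \<subseteq> {2..<q} \<and> card T = 2 \<and> rel T}"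
definition Cq :: "nat \<Rightarrow> nat set" where "Cq q = {c. 2 \<le> c \<and> c^2 < q}"
definition Iq :: "nat \<Rightarrow> nat set" where "Iq q = {i. 1 \<le> i \<and> 2^i < q}"

lemma Cq_sub: "Cq q \<subseteq> {1..nat \<lfloor>sqrt (real q)\<rfloor>}"
proof
  fix c assume "c \<in> Cq q"
  hence c: "2 \<le> c" "c^2 < q" by (auto simp: Cq_def)
  hence "real c ^ 2 < real q" by (metis of_nat_less_iff of_nat_power)
  hence "real c < sqrt (real q)" by (rule real_less_rsqrt)
  hence "int c \<le> \<lfloor>sqrt (real q)\<rfloor>" by (simp add: le_floor_iff)
  thus "c \<in> {1..nat \<lfloor>sqrt (real q)\<rfloor>}" using c by auto
qed

lemma card_Cq: "real (card (Cq q)) \<le> sqrt (real q)"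
proof -
  have "card (Cq q) \<le> card {1..nat \<lfloor>sqrt (real q)\<rfloor>}" by (intro card_mono Cq_sub) auto
  hence "card (Cq q) \<le> nat \<lfloor>sqrt (real q)\<rfloor>" by simp
  hence "real (card (Cq q)) \<le> real (nat \<lfloor>sqrt (real q)\<rfloor>)" by (rule of_nat_mono)
  also have "\<dots> \<le> sqrt (real q)" using of_int_floor_le[of "sqrt (real q)"] by simp
  finally show ?thesis .
qed

lemma Iq_sub: "Iq q \<subseteq> {1..nat \<lfloor>log 2 (real q)\<rfloor>}"
proof
  fix i assume "i \<in> Iq q"
  hence i: "1 \<le> i" "2^i < q" by (auto simp: Iq_def)
  hence "(2::real) powr real i < real q" by (simp add: powr_realpow)
  moreover have "real q > 0" using i by (metis gr0I not_less0 of_nat_0_less_iff)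
  ultimately have "real i < log 2 (real q)" by (subst less_log_iff) auto
  hence "int i \<le> \<lfloor>log 2 (real q)\<rfloor>" by (simp add: le_floor_iff)
  thus "i \<in> {1..nat \<lfloor>log 2 (real q)\<rfloor>}" using i by auto
qed

lemma card_Iq: "real (card (Iq q)) \<le> max 0 (log 2 (real q))"
proof -
  have "card (Iq q) \<le> card {1..nat \<lfloor>log 2 (real q)\<rfloor>}" by (intro card_mono Iq_sub) auto
  hence "card (Iq q) \<le> nat \<lfloor>log 2 (real q)\<rfloor>" by simp
  hence "real (card (Iq q)) \<le> real (nat \<lfloor>log 2 (real q)\<rfloor>)" by (rule of_nat_mono)
  also have "\<dots> \<le> max 0 (log 2 (real q))" by linarith
  finally show ?thesis .
qed

lemma G2_sub: "G2 q \<subseteq> (\<lambda>(c,i,j). {c^i, c^j}) ` (Cq q \<times> Iq q \<times> Iq q)"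
proof
  fix T assume "T \<in> G2 q"
  hence T: "T \<subseteq> {2..<q}" "card T = 2" "rel T" by (auto simp: G2_def)
  then obtain a b where ab: "T = {a,b}" "a \<noteq> b" by (auto simp: card_2_iff)
  have abq: "a \<ge> 2" "b \<ge> 2" "a < q" "b < q" using T(1) ab by auto
  obtain x y where xy: "x > 0" "y > 0" "a^x = b^y" using rel_two[of a b] T(3) ab abq by auto
  obtain c i j where cij: "c \<ge> 2" "a = c^i" "b = c^j" "i \<ge> 1" "j \<ge> 1" "i \<noteq> j"
    using pow_eq_common_base[OF abq(1,2) ab(2) xy] by blast
  have "c^2 < q"
  proof (cases "i \<ge> 2")
    case True
    hence "c^2 \<le> c^i" using cij by (intro power_increasing) auto
    thus ?thesis using abq cij by linarith
  next
    case False
    hence "j \<ge> 2" using cij by auto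
    hence "c^2 \<le> c^j" using cij by (intro power_increasing) auto
    thus ?thesis using abq cij by linarith
  qed
  moreover have "2^i < q" "2^j < q"
  proof -
    have "(2::nat)^i \<le> c^i" "(2::nat)^j \<le> c^j" using cij by (auto intro: power_mono)
    thus "2^i < q" "2^j < q" using abq cij by linarith+
  qed
  ultimately have "(c,i,j) \<in> Cq q \<times> Iq q \<times> Iq q" using cij by (auto simp: Cq_def Iq_def)
  thus "T \<in> (\<lambda>(c,i,j). {c^i, c^j}) ` (Cq q \<times> Iq q \<times> Iq q)" using ab cij by force
qed

lemma card_G2: "real (card (G2 q)) \<le> sqrt (real q) * (max 0 (log 2 (real q)))^2"
proof -
  have fin: "finite (Cq q \<times> Iq q \<times> Iq q)"
    using finite_subset[OF Cq_sub] finite_subset[OF Iq_sub] by (intro finite_cartesian_product) auto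
  have "card (G2 q) \<le> card ((\<lambda>(c,i,j). {c^i, c^j}) ` (Cq q \<times> Iq q \<times> Iq q))"
    using fin by (intro card_mono G2_sub) auto
  also have "\<dots> \<le> card (Cq q \<times> Iq q \<times> Iq q)" using fin by (rule card_image_le)
  also have "\<dots> = card (Cq q) * card (Iq q) * card (Iq q)" by (simp add: card_cartesian_product)
  finally have "real (card (G2 q)) \<le> real (card (Cq q)) * real (card (Iq q)) * real (card (Iq q))"
    by (metis of_nat_le_iff of_nat_mult)
  also have "\<dots> \<le> sqrt (real q) * max 0 (log 2 (real q)) * max 0 (log 2 (real q))"
    using card_Cq card_Iq by (intro mult_mono) auto
  finally show ?thesis by (simp add: power2_eq_square mult.assoc)
qed


definition Gt :: "nat \<Rightarrow> nat \<Rightarrow> nat set set" where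
  "Gt q t = {T. T \<subseteq> {2..<q} \<and> card T = t \<and> shared T}"
definition Sq :: "nat \<Rightarrow> nat \<Rightarrow> nat set" where "Sq q t = {s. 1 \<le> s \<and> s^2 \<le> q^t}"
definition Vs :: "nat \<Rightarrow> nat \<Rightarrow> nat \<Rightarrow> nat set" where "Vs q t s = {v. v dvd s \<and> v*s^2 \<le> q^t}"
definition Kd :: "real \<Rightarrow> real" where "Kd \<delta> = (2/\<delta>) powr (2 powr (1/\<delta>) + 1)"

lemma Gt_sub: "Gt q t \<subseteq> (\<Union>s\<in>Sq q t. \<Union>v\<in>Vs q t s. {T. T \<subseteq> {d. d dvd v*s^2} \<and> card T = t})"
proof
  fix T assume "T \<in> Gt q t"
  hence T: "T \<subseteq> {2..<q}" "card T = t" "shared T" by (auto simp: Gt_def)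
  have fin: "finite T" using T(1) finite_subset by blast
  define N where "N = \<Prod>T"
  have N0: "N > 0" unfolding N_def using T(1) fin by (intro prod_pos) auto
  have "N \<le> (\<Prod>n\<in>T. q)" unfolding N_def using T(1) by (intro prod_mono) auto
  hence Nq: "N \<le> q^t" using T(2) by simp
  define s where "s = square_part N"
  define v where "v = squarefree_part N"
  have Nvs: "N = v * s^2" unfolding v_def s_def by (rule squarefree_decompose)
  have "s \<noteq> 0" using N0 by (simp add: s_def)
  have "s^2 dvd N" unfolding s_def by simp
  hence "s^2 \<le> N" using N0 by (rule dvd_imp_le)
  have "v dvd s" unfolding v_def s_def
    by (rule powerful_sqf_dvd[OF N0]) (use shared_powerful[OF fin T(3)] in \<open>auto simp: N_def\<close>)
  have sS: "s \<in> Sq q t" using \<open>s\<noteq>0\<close> \<open>s^2 \<le> N\<close> Nq by (auto simp: Sq_def)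
  have vV: "v \<in> Vs q t s" using \<open>v dvd s\<close> Nq Nvs by (auto simp: Vs_def)
  have "T \<subseteq> {d. d dvd v*s^2}"
  proof
    fix n assume "n \<in> T"
    hence "n dvd N" unfolding N_def using dvd_prodI[OF fin, of n "\<lambda>x. x"] by simp
    thus "n \<in> {d. d dvd v*s^2}" using Nvs by simp
  qed
  thus "T \<in> (\<Union>s\<in>Sq q t. \<Union>v\<in>Vs q t s. {T. T \<subseteq> {d. d dvd v*s^2} \<and> card T = t})"
    using sS vV T(2) by blast
qed

lemma Sq_sub: "Sq q t \<subseteq> {1..nat \<lfloor>sqrt (real q ^ t)\<rfloor>}"
proof
  fix c assume "c \<in> Sq q t"
  hence c: "1 \<le> c" "c^2 \<le> q^t" by (auto simp: Sq_def)
  hence "real c ^ 2 \<le> real q ^ t" by (metis of_nat_le_iff of_nat_power)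
  hence "real c \<le> sqrt (real q ^ t)" by (rule real_le_rsqrt)
  hence "int c \<le> \<lfloor>sqrt (real q ^ t)\<rfloor>" by (simp add: le_floor_iff)
  thus "c \<in> {1..nat \<lfloor>sqrt (real q ^ t)\<rfloor>}" using c by auto
qed

lemma card_Sq: "real (card (Sq q t)) \<le> sqrt (real q ^ t)"
proof -
  have "card (Sq q t) \<le> card {1..nat \<lfloor>sqrt (real q ^ t)\<rfloor>}" by (intro card_mono Sq_sub) auto
  hence "card (Sq q t) \<le> nat \<lfloor>sqrt (real q ^ t)\<rfloor>" by simp
  hence "real (card (Sq q t)) \<le> real (nat \<lfloor>sqrt (real q ^ t)\<rfloor>)" by (rule of_nat_mono)
  also have "\<dots> \<le> sqrt (real q ^ t)" using of_int_floor_le[of "sqrt (real q ^ t)"] by simp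
  finally show ?thesis .
qed

lemma dc_le_Y:
  assumes d: "0 < \<delta>" "\<delta> \<le> 1" and m: "0 < m" "m \<le> q^t"
  shows "real (dc m) \<le> (real q ^ t) powr \<delta> * Kd \<delta>"
proof -
  have "real (dc m) \<le> real m powr \<delta> * Kd \<delta>" using dc_bound[OF d m(1)] by (simp add: Kd_def)
  also have "\<dots> \<le> (real q ^ t) powr \<delta> * Kd \<delta>"
  proof (intro mult_right_mono powr_mono2)
    show "real m \<le> real q ^ t" using m by (metis of_nat_le_iff of_nat_power)
  qed (use d in \<open>auto simp: Kd_def\<close>)
  finally show ?thesis .
qed

lemma card_Gt:
  assumes d: "0 < \<delta>" "\<delta> \<le> 1"
  shows "real (card (Gt q t)) \<le> sqrt (real q ^ t) * ((real q ^ t) powr \<delta> * Kd \<delta>) ^ (t+1)"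
proof -
  define Y where "Y = (real q ^ t) powr \<delta> * Kd \<delta>"
  have Y0: "Y \<ge> 0" by (simp add: Y_def Kd_def)
  have finS: "finite (Sq q t)" using finite_subset[OF Sq_sub] by blast
  have finV: "finite (Vs q t s)" if "s \<in> Sq q t" for s
  proof -
    have "Vs q t s \<subseteq> {d. d dvd s}" by (auto simp: Vs_def)
    moreover have "s > 0" using that by (auto simp: Sq_def)
    ultimately show ?thesis using finite_subset by fastforce
  qed
  have "card (Gt q t) \<le> card (\<Union>s\<in>Sq q t. \<Union>v\<in>Vs q t s. {T. T \<subseteq> {d. d dvd v*s^2} \<and> card T = t})"
  proof (rule card_mono[OF _ Gt_sub])
    show "finite (\<Union>s\<in>Sq q t. \<Union>v\<in>Vs q t s. {T. T \<subseteq> {d. d dvd v*s^2} \<and> card T = t})"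
    proof (intro finite_UN_I finS finV)
      fix s v assume "s \<in> Sq q t" "v \<in> Vs q t s"
      hence "v * s^2 > 0" by (auto simp: Sq_def Vs_def intro!: Nat.gr0I)
      hence "finite {d. d dvd v*s^2}" by simp
      thus "finite {T. T \<subseteq> {d. d dvd v*s^2} \<and> card T = t}" by simp
    qed
  qed
  also have "\<dots> \<le> (\<Sum>s\<in>Sq q t. card (\<Union>v\<in>Vs q t s. {T. T \<subseteq> {d. d dvd v*s^2} \<and> card T = t}))"
    by (rule card_UN_le[OF finS])
  also have "\<dots> \<le> (\<Sum>s\<in>Sq q t. \<Sum>v\<in>Vs q t s. card {T. T \<subseteq> {d. d dvd v*s^2} \<and> card T = t})"
    by (intro sum_mono card_UN_le finV)
  finally have c1: "real (card (Gt q t)) \<le> (\<Sum>s\<in>Sq q t. \<Sum>v\<in>Vs q t s. real (card {T. T \<subseteq> {d. d dvd v*s^2} \<and> card T = t}))"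
    by (metis (no_types, lifting) of_nat_le_iff of_nat_sum sum.cong)
  have c2: "real (card {T. T \<subseteq> {d. d dvd v*s^2} \<and> card T = t}) \<le> Y ^ t"
    if "s \<in> Sq q t" "v \<in> Vs q t s" for s v
  proof -
    have pos: "v * s^2 > 0" using that by (auto simp: Sq_def Vs_def intro!: Nat.gr0I)
    have "card {T. T \<subseteq> {d. d dvd v*s^2} \<and> card T = t} = dc (v*s^2) choose t"
      unfolding dc_def using pos by (intro n_subsets) simp
    also have "\<dots> \<le> dc (v*s^2) ^ t"
      by (cases "t \<le> dc (v*s^2)") (auto simp: binomial_le_pow binomial_eq_0)
    finally have "real (card {T. T \<subseteq> {d. d dvd v*s^2} \<and> card T = t}) \<le> real (dc (v*s^2)) ^ t"
      by (metis of_nat_le_iff of_nat_power)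
    also have "\<dots> \<le> Y ^ t"
      using dc_le_Y[OF d pos] that by (intro power_mono) (auto simp: Vs_def Y_def)
    finally show ?thesis .
  qed
  have c3: "real (card (Vs q t s)) \<le> Y" if "s \<in> Sq q t" for s
  proof -
    have sp: "s > 0" "s \<le> q^t" using that by (auto simp: Sq_def intro: le_trans[OF _ power2_nat_le_imp_le] )
    have "card (Vs q t s) \<le> dc s" unfolding dc_def
      using sp by (intro card_mono) (auto simp: Vs_def)
    hence "real (card (Vs q t s)) \<le> real (dc s)" by (rule of_nat_mono)
    also have "\<dots> \<le> Y" using dc_le_Y[OF d sp] by (simp add: Y_def)
    finally show ?thesis .
  qed
  have "(\<Sum>s\<in>Sq q t. \<Sum>v\<in>Vs q t s. real (card {T. T \<subseteq> {d. d dvd v*s^2} \<and> card T = t}))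
        \<le> (\<Sum>s\<in>Sq q t. \<Sum>v\<in>Vs q t s. Y ^ t)"
    using c2 by (intro sum_mono) auto
  also have "\<dots> = (\<Sum>s\<in>Sq q t. real (card (Vs q t s)) * Y ^ t)" by simp
  also have "\<dots> \<le> (\<Sum>s\<in>Sq q t. Y * Y ^ t)"
    using c3 Y0 by (intro sum_mono mult_right_mono) auto
  also have "\<dots> = real (card (Sq q t)) * Y ^ (t+1)" by simp
  also have "\<dots> \<le> sqrt (real q ^ t) * Y ^ (t+1)"
    using card_Sq Y0 by (intro mult_right_mono) auto
  finally show ?thesis using c1 by (simp add: Y_def)
qed



definition depS :: "nat \<Rightarrow> nat \<Rightarrow> nat set set" where
  "depS q k = {S. S \<subseteq> {2..<q} \<and> card S = k \<and> \<not> mult_indep S}"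

definition Gall :: "nat \<Rightarrow> nat \<Rightarrow> nat set set" where
  "Gall q t = (if t = 2 then G2 q else Gt q t)"

lemma card_ext:
  assumes U: "finite U" and TU: "T \<subseteq> U"
  shows "card {S. S \<subseteq> U \<and> card S = k \<and> T \<subseteq> S} \<le> card U ^ (k - card T)"
proof -
  have fT: "finite T" using U TU finite_subset by blast
  have "card {S. S \<subseteq> U \<and> card S = k \<and> T \<subseteq> S} \<le> card {R. R \<subseteq> U \<and> card R = k - card T}"
  proof (rule card_inj_on_le[of "\<lambda>S. S - T"])
    show "inj_on (\<lambda>S. S - T) {S. S \<subseteq> U \<and> card S = k \<and> T \<subseteq> S}"
      by (rule inj_onI) blast
    show "(\<lambda>S. S - T) ` {S. S \<subseteq> U \<and> card S = k \<and> T \<subseteq> S} \<subseteq> {R. R \<subseteq> U \<and> card R = k - card T}"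
    proof safe
      fix S assume "S \<subseteq> U" "T \<subseteq> S"
      thus "card (S - T) = card S - card T" using fT by (intro card_Diff_subset) auto
    qed auto
    show "finite {R. R \<subseteq> U \<and> card R = k - card T}" using U by simp
  qed
  also have "\<dots> = card U choose (k - card T)" using U by (rule n_subsets)
  also have "\<dots> \<le> card U ^ (k - card T)"
    by (cases "k - card T \<le> card U") (auto simp: binomial_le_pow binomial_eq_0)
  finally show ?thesis .
qed

lemma dep_sub:
  "depS q k \<subseteq> (\<Union>t\<in>{2..k}. \<Union>T\<in>Gall q t. {S. S \<subseteq> {2..<q} \<and> card S = k \<and> T \<subseteq> S})"
proof
  fix S assume "S \<in> depS q k"
  hence S: "S \<subseteq> {2..<q}" "card S = k" "\<not> mult_indep S" by (auto simp: depS_def)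
  have fS: "finite S" using S(1) finite_subset by blast
  obtain T where T: "T \<subseteq> S" "T \<noteq> {}" "rel T" using dep_rel[OF fS S(3)] by blast
  have fT: "finite T" using fS T(1) finite_subset by blast
  have sh: "shared T" using rel_shared[OF fT T(3)] .
  have "\<forall>n\<in>T. n \<ge> 2" using T(1) S(1) by auto
  hence "card T \<ge> 2" using shared_card_ge2[OF sh T(2) _ fT] by blast
  moreover have "card T \<le> k" using card_mono[OF fS T(1)] S(2) by simp
  moreover have "T \<in> Gall q (card T)"
    using T S(1) sh by (auto simp: Gall_def G2_def Gt_def)
  ultimately have "card T \<in> {2..k}" "T \<in> Gall q (card T)" by auto
  moreover have "S \<in> {S. S \<subseteq> {2..<q} \<and> card S = k \<and> T \<subseteq> S}" using S T(1) by auto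
  ultimately show "S \<in> (\<Union>t\<in>{2..k}. \<Union>T\<in>Gall q t. {S. S \<subseteq> {2..<q} \<and> card S = k \<and> T \<subseteq> S})"
    by blast
qed

lemma card_dep:
  "real (card (depS q k)) \<le> (\<Sum>t\<in>{2..k}. real (card (Gall q t)) * real (q-2) ^ (k-t))"
proof -
  have finG: "finite (Gall q t)" for t
  proof -
    have "Gall q t \<subseteq> Pow {2..<q}" by (auto simp: Gall_def G2_def Gt_def)
    thus ?thesis using finite_subset by blast
  qed
  have fin2: "finite {S. S \<subseteq> {2..<q} \<and> card S = k \<and> T \<subseteq> S}" for T by simp
  have "card (depS q k) \<le> card (\<Union>t\<in>{2..k}. \<Union>T\<in>Gall q t. {S. S \<subseteq> {2..<q} \<and> card S = k \<and> T \<subseteq> S})"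
    by (rule card_mono[OF _ dep_sub]) (auto intro!: finite_UN_I finG)
  also have "\<dots> \<le> (\<Sum>t\<in>{2..k}. card (\<Union>T\<in>Gall q t. {S. S \<subseteq> {2..<q} \<and> card S = k \<and> T \<subseteq> S}))"
    by (rule card_UN_le) simp
  also have "\<dots> \<le> (\<Sum>t\<in>{2..k}. \<Sum>T\<in>Gall q t. card {S. S \<subseteq> {2..<q} \<and> card S = k \<and> T \<subseteq> S})"
    by (intro sum_mono card_UN_le finG)
  also have "\<dots> \<le> (\<Sum>t\<in>{2..k}. \<Sum>T\<in>Gall q t. (q-2) ^ (k-t))"
  proof (intro sum_mono)
    fix t T assume "t \<in> {2..k}" "T \<in> Gall q t"
    hence "T \<subseteq> {2..<q}" "card T = t" by (auto simp: Gall_def G2_def Gt_def split: if_splits)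
    thus "card {S. S \<subseteq> {2..<q} \<and> card S = k \<and> T \<subseteq> S} \<le> (q-2) ^ (k-t)"
      using card_ext[of "{2..<q}" T k] by simp
  qed
  also have "\<dots> = (\<Sum>t\<in>{2..k}. card (Gall q t) * (q-2) ^ (k-t))" by simp
  finally show ?thesis by (metis (mono_tags, lifting) of_nat_le_iff of_nat_mult of_nat_power of_nat_sum sum.cong)
qed


lemma Kd_ge1: "0 < \<delta> \<Longrightarrow> \<delta> \<le> 1 \<Longrightarrow> Kd \<delta> \<ge> 1"
  unfolding Kd_def by (rule ge_one_powr_ge_zero) (auto simp: field_simps)

lemma Y_ge1:
  assumes "0 < \<delta>" "\<delta> \<le> 1" "q \<ge> 1"
  shows "(real q ^ t) powr \<delta> * Kd \<delta> \<ge> 1"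
proof -
  have "(real q ^ t) powr \<delta> \<ge> 1" using assms by (intro ge_one_powr_ge_zero) (auto simp: one_le_power)
  thus ?thesis using Kd_ge1[OF assms(1,2)] by (metis mult_mono' mult_1 zero_le_one)
qed

lemma Y_mono:
  assumes "0 < \<delta>" "\<delta> \<le> 1" "q \<ge> 1" "t \<le> k"
  shows "(real q ^ t) powr \<delta> * Kd \<delta> \<le> (real q ^ k) powr \<delta> * Kd \<delta>"
proof (intro mult_right_mono powr_mono2)
  show "real q ^ t \<le> real q ^ k" using assms by (intro power_increasing) auto
qed (use assms Kd_ge1[of \<delta>] in auto)

lemma sqrt_pow_powr: "q > 0 \<Longrightarrow> sqrt (real q ^ t) = real q powr (real t / 2)"
  by (simp add: sqrt_def root_powr_inverse powr_realpow[symmetric] powr_powr) 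

lemma dep_bound:
  assumes q: "q \<ge> 3" and d: "0 < \<delta>" "\<delta> \<le> 1"
  shows "real (card (depS q k)) \<le> real k * (real q powr (real k - 3/2) *
           ((max 0 (log 2 (real q)))^2 + ((real q ^ k) powr \<delta> * Kd \<delta>) ^ (k+1)))"
proof -
  define L where "L = (max 0 (log 2 (real q)))^2"
  define W where "W = ((real q ^ k) powr \<delta> * Kd \<delta>) ^ (k+1)"
  define R where "R = real q powr (real k - 3/2) * (L + W)"
  have L0: "L \<ge> 0" by (simp add: L_def)
  have W1: "W \<ge> 1" unfolding W_def using Y_ge1[OF d, of q k] q by (intro one_le_power) auto
  have qpos: "real q > 0" using q by simp
  have tm: "real (card (Gall q t)) * real (q-2) ^ (k-t) \<le> R" if t: "t \<in> {2..k}" for t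
  proof -
    have qq: "real (q-2) ^ (k-t) \<le> real q ^ (k-t)" by (intro power_mono) auto
    have qkt: "real q ^ (k-t) = real q powr (real k - real t)"
      using qpos t by (simp add: powr_realpow[symmetric] of_nat_diff)
    show ?thesis
    proof (cases "t = 2")
      case True
      have "real (card (Gall q t)) * real (q-2) ^ (k-t) \<le> (sqrt (real q) * L) * real q ^ (k-t)"
        using True card_G2[of q] qq by (intro mult_mono) (auto simp: Gall_def L_def)
      also have "\<dots> = real q powr (real k - 3/2) * L"
      proof -
        have "sqrt (real q) = real q powr (1/2)" using sqrt_pow_powr[of q 1] qpos by simp
        thus ?thesis using True qkt qpos by (simp add: powr_add[symmetric] algebra_simps)
      qed
      also have "\<dots> \<le> R" unfolding R_def using W1 by (intro mult_left_mono) auto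
      finally show ?thesis .
    next
      case False
      have Yt: "((real q ^ t) powr \<delta> * Kd \<delta>) ^ (t+1) \<le> W"
      proof -
        have "((real q ^ t) powr \<delta> * Kd \<delta>) ^ (t+1) \<le> ((real q ^ k) powr \<delta> * Kd \<delta>) ^ (t+1)"
          using Y_mono[OF d, of q t k] Y_ge1[OF d, of q t] q t by (intro power_mono) auto
        also have "\<dots> \<le> W" unfolding W_def using Y_ge1[OF d, of q k] q t
          by (intro power_increasing) auto
        finally show ?thesis .
      qed
      have "real (card (Gall q t)) * real (q-2) ^ (k-t) \<le> (sqrt (real q ^ t) * W) * real q ^ (k-t)"
      proof (intro mult_mono qq)
        have "real (card (Gall q t)) \<le> sqrt (real q ^ t) * ((real q ^ t) powr \<delta> * Kd \<delta>) ^ (t+1)"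
          using False card_Gt[OF d, of q t] by (simp add: Gall_def)
        also have "\<dots> \<le> sqrt (real q ^ t) * W" using Yt by (intro mult_left_mono) auto
        finally show "real (card (Gall q t)) \<le> sqrt (real q ^ t) * W" .
      qed (use W1 in auto)
      also have "\<dots> = real q powr (real k - real t / 2) * W"
        using qkt qpos by (simp add: sqrt_pow_powr powr_add[symmetric] algebra_simps)
      also have "\<dots> \<le> real q powr (real k - 3/2) * W"
        using False t q W1 by (intro mult_right_mono powr_mono) auto
      also have "\<dots> \<le> R" unfolding R_def using L0 by (intro mult_left_mono) auto
      finally show ?thesis .
    qed
  qed
  have "real (card (depS q k)) \<le> (\<Sum>t\<in>{2..k}. real (card (Gall q t)) * real (q-2) ^ (k-t))"
    by (rule card_dep)
  also have "\<dots> \<le> (\<Sum>t\<in>{2..k}. R)" using tm by (intro sum_mono) auto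
  also have "\<dots> = real (card {2..k}) * R" by simp
  also have "\<dots> \<le> real k * R"
    unfolding R_def using L0 W1 by (intro mult_right_mono) auto
  finally show ?thesis by (simp add: R_def L_def W_def)
qed



lemma W_bound:
  fixes x c \<eta> :: real and k :: nat
  assumes x: "x > 1" and ll: "ln (ln x) \<ge> 2" and k1: "k \<ge> 1"
  and kc: "real k \<le> c * sqrt (ln (ln x))" and c: "0 \<le> c" "c \<le> 1" "16 * c^2 \<le> \<eta>"
  and f: "sqrt (ln (ln x)) * (sqrt (ln x) + 1) * ln (ln (ln x) / ln 2) \<le> (\<eta>/16) * ln x"
  shows "((x ^ k) powr (2 * ln 2 / ln (ln x)) * Kd (2 * ln 2 / ln (ln x))) ^ (k+1) \<le> x powr (\<eta>/2)"
proof -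
  define lx where "lx = ln x"
  define l2 where "l2 = ln (ln x)"
  define \<delta> where "\<delta> = 2 * ln 2 / l2"
  have lx0: "lx > 0" using x by (simp add: lx_def)
  have l2: "l2 \<ge> 2" using ll by (simp add: l2_def)
  have ln2: "0 < ln (2::real)" "ln (2::real) < 1" using ln_2_less_1 by auto
  have d0: "\<delta> > 0" using l2 ln2 by (simp add: \<delta>_def)
  have elx: "exp l2 = lx" using lx0 by (simp add: l2_def lx_def)
  have p1: "(x ^ k) powr \<delta> = exp (real k * \<delta> * lx)"
    using x by (simp add: powr_realpow[symmetric] powr_powr powr_def lx_def mult_ac)
  have "2 powr (1/\<delta>) = exp (l2 / 2)"
    using ln2 l2 by (simp add: powr_def \<delta>_def field_simps)
  also have "exp (l2/2) = sqrt lx"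
  proof -
    have "exp (l2/2) ^ 2 = exp l2" by (simp add: exp_add[symmetric] power2_eq_square)
    hence "sqrt (exp l2) = exp (l2/2)" by (metis abs_of_pos exp_gt_zero real_sqrt_abs)
    thus ?thesis using elx by simp
  qed
  finally have p2: "2 powr (1/\<delta>) = sqrt lx" .
  have p3: "2/\<delta> = l2 / ln 2" using ln2 l2 by (simp add: \<delta>_def field_simps)
  have lg0: "ln (l2 / ln 2) \<ge> 0" using ln2 l2 by (simp add: field_simps)
  have Kd_eq: "Kd \<delta> = exp ((sqrt lx + 1) * ln (l2 / ln 2))"
    unfolding Kd_def p2 p3 using ln2 l2 by (simp add: powr_def mult_ac)
  define A where "A = real k * \<delta> * lx + (sqrt lx + 1) * ln (l2 / ln 2)"
  have prod: "(x ^ k) powr \<delta> * Kd \<delta> = exp A" unfolding p1 Kd_eq A_def by (simp add: exp_add)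
  have kk: "real k ^ 2 \<le> c^2 * l2"
  proof -
    have "real k ^ 2 \<le> (c * sqrt l2) ^ 2" using kc k1 by (intro power_mono) (auto simp: l2_def)
    also have "\<dots> = c^2 * l2" using l2 by (simp add: power_mult_distrib)
    finally show ?thesis .
  qed
  have k2: "real k + 1 \<le> 2 * real k" using k1 by simp
  have t1: "(real k + 1) * (real k * \<delta> * lx) \<le> (\<eta>/4) * lx"
  proof -
    have "(real k + 1) * (real k * \<delta>) \<le> (2 * real k) * (real k * \<delta>)"
      using k2 d0 by (intro mult_right_mono) auto
    also have "\<dots> = 2 * real k ^ 2 * \<delta>" by (simp add: power2_eq_square)
    also have "\<dots> \<le> 2 * (c^2 * l2) * \<delta>" using kk d0 by (intro mult_right_mono) auto
    also have "\<dots> = 4 * c^2 * ln 2" using l2 by (simp add: \<delta>_def field_simps)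
    also have "\<dots> \<le> 4 * c^2" using ln2 mult_left_mono[of "ln 2" 1 "4*c^2"] by simp
    also have "\<dots> \<le> \<eta>/4" using c by simp
    finally have "(real k + 1) * (real k * \<delta>) \<le> \<eta>/4" .
    hence "(real k + 1) * (real k * \<delta>) * lx \<le> (\<eta>/4) * lx" using lx0 by (intro mult_right_mono) auto
    thus ?thesis by (simp add: mult_ac)
  qed
  have t2: "(real k + 1) * ((sqrt lx + 1) * ln (l2 / ln 2)) \<le> (\<eta>/8) * lx"
  proof -
    have B0: "(sqrt lx + 1) * ln (l2 / ln 2) \<ge> 0" using lg0 lx0 by (intro mult_nonneg_nonneg) auto
    have "(real k + 1) * ((sqrt lx + 1) * ln (l2 / ln 2)) \<le> (2 * (c * sqrt l2)) * ((sqrt lx + 1) * ln (l2 / ln 2))"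
      using k2 kc B0 by (intro mult_right_mono) (auto simp: l2_def)
    also have "\<dots> \<le> (2 * sqrt l2) * ((sqrt lx + 1) * ln (l2 / ln 2))"
      using c B0 l2 by (intro mult_right_mono) (auto simp: mult_left_le_one_le)
    also have "\<dots> = 2 * (sqrt l2 * (sqrt lx + 1) * ln (l2 / ln 2))" by (simp add: mult_ac)
    also have "\<dots> \<le> 2 * ((\<eta>/16) * lx)" using f by (simp add: l2_def lx_def)
    finally show ?thesis by simp
  qed
  have "(real k + 1) * A \<le> (\<eta>/2) * lx"
  proof -
    have "(real k + 1) * A = (real k + 1) * (real k * \<delta> * lx) + (real k + 1) * ((sqrt lx + 1) * ln (l2 / ln 2))"
      unfolding A_def by (simp add: distrib_left)
    also have "\<dots> \<le> (\<eta>/4) * lx + (\<eta>/8) * lx" using t1 t2 by linarith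
    also have "\<dots> \<le> (\<eta>/2) * lx" using lx0 c(3) by (simp add: field_simps) (smt (verit) zero_le_power2 mult_nonneg_nonneg)
    finally show ?thesis .
  qed
  hence ee: "exp ((real k + 1) * A) \<le> exp ((\<eta>/2) * lx)" by (subst exp_le_cancel_iff)
  moreover have "(exp A) ^ (k+1) = exp ((real k + 1) * A)" by (simp add: exp_of_nat_mult[symmetric] exp_add[symmetric] algebra_simps)
  moreover have "exp ((\<eta>/2) * lx) = x powr (\<eta>/2)" using x by (simp add: powr_def lx_def mult_ac)
  ultimately have "(exp A) ^ (k+1) \<le> x powr (\<eta>/2)" by metis
  thus ?thesis using prod by (simp add: \<delta>_def l2_def)
qed


lemma core_point:
  assumes q: "q \<ge> 3" and ll: "ln (ln (real q)) \<ge> 2" and k1: "k \<ge> 1"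
  and kc: "real k \<le> c * sqrt (ln (ln (real q)))" and c: "0 \<le> c" "c \<le> 1" "16*c^2 \<le> \<eta>" and \<eta>: "0 < \<eta>"
  and f: "sqrt (ln (ln (real q))) * (sqrt (ln (real q)) + 1) * ln (ln (ln (real q)) / ln 2) \<le> (\<eta>/16) * ln (real q)"
  and L: "(max 0 (log 2 (real q)))^2 \<le> real q powr (\<eta>/8)"
  and kq: "real k \<le> real q powr (\<eta>/8)"
  shows "real (card (depS q k)) \<le> 2 * real q powr (real k - 3/2 + 5*\<eta>/8)"
proof -
  define x where "x = real q"
  define \<delta> where "\<delta> = 2 * ln 2 / ln (ln x)"
  have x1: "x > 1" using q by (simp add: x_def)
  have ln2: "0 < ln (2::real)" "ln (2::real) < 1" using ln_2_less_1 by auto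
  have d: "0 < \<delta>" "\<delta> \<le> 1" using ll ln2 by (auto simp: \<delta>_def x_def field_simps)
  define W where "W = ((x ^ k) powr \<delta> * Kd \<delta>) ^ (k+1)"
  have W: "W \<le> x powr (\<eta>/2)" unfolding W_def \<delta>_def
    by (rule W_bound[OF x1 _ k1 _ c f[folded x_def]]) (use ll kc in \<open>auto simp: x_def\<close>)
  have dep: "real (card (depS q k)) \<le> real k * (x powr (real k - 3/2) * ((max 0 (log 2 x))^2 + W))"
    using dep_bound[OF q d, of k] by (simp add: x_def W_def)
  have e1: "x powr (\<eta>/8) \<le> x powr (\<eta>/2)" using x1 \<eta> by (intro powr_mono) auto
  have "real k * ((max 0 (log 2 x))^2 + W) \<le> x powr (\<eta>/8) * (x powr (\<eta>/8) + x powr (\<eta>/2))"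
    using kq L W by (intro mult_mono add_mono) (auto simp: x_def W_def Kd_def)
  also have "\<dots> \<le> x powr (\<eta>/8) * (2 * x powr (\<eta>/2))" using e1 by (intro mult_left_mono) auto
  also have "\<dots> = 2 * x powr (5*\<eta>/8)" by (simp add: powr_add[symmetric])
  finally have kLW: "real k * ((max 0 (log 2 x))^2 + W) \<le> 2 * x powr (5*\<eta>/8)" .
  have "real (card (depS q k)) \<le> x powr (real k - 3/2) * (real k * ((max 0 (log 2 x))^2 + W))"
    using dep by (simp add: mult_ac)
  also have "\<dots> \<le> x powr (real k - 3/2) * (2 * x powr (5*\<eta>/8))" using kLW by (intro mult_left_mono) auto
  also have "\<dots> = 2 * x powr (real k - 3/2 + 5*\<eta>/8)" by (simp add: powr_add)
  finally show ?thesis by (simp add: x_def)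
qed



lemma ev_ll2: "eventually (\<lambda>q::nat. ln (ln (real q)) \<ge> 2) at_top" by real_asymp
lemma ev_lnq2: "eventually (\<lambda>q::nat. ln (real q) \<ge> 2) at_top" by real_asymp

lemma ev_Log2: "eventually (\<lambda>q::nat. Log2 (real q) = ln (ln (real q))) at_top"
  using ev_ll2 ev_lnq2
proof eventually_elim
  case (elim q)
  thus ?case by (simp add: Log2_def Log_def)
qed

lemma ev_f:
  assumes "\<eta> > 0"
  shows "eventually (\<lambda>q::nat. sqrt (ln (ln (real q))) * (sqrt (ln (real q)) + 1) * ln (ln (ln (real q)) / ln 2) \<le> (\<eta>/16) * ln (real q)) at_top"
proof -
  have lim: "((\<lambda>q::nat. sqrt (ln (ln (real q))) * (sqrt (ln (real q)) + 1) * ln (ln (ln (real q)) / ln 2) / ln (real q)) \<longlongrightarrow> 0) at_top"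
    by real_asymp
  have "eventually (\<lambda>q::nat. sqrt (ln (ln (real q))) * (sqrt (ln (real q)) + 1) * ln (ln (ln (real q)) / ln 2) / ln (real q) < \<eta>/16) at_top"
    using order_tendstoD(2)[OF lim, of "\<eta>/16"] assms by (simp only: zero_less_divide_iff) simp
  thus ?thesis using ev_lnq2
  proof eventually_elim
    case (elim q)
    hence "ln (real q) > 0" by simp
    thus ?case using elim(1) by (simp add: divide_less_eq)
  qed
qed

lemma ev_L:
  assumes "\<eta> > 0"
  shows "eventually (\<lambda>q::nat. (max 0 (log 2 (real q)))^2 \<le> real q powr (\<eta>/8)) at_top"
proof -
  have "eventually (\<lambda>q::nat. log 2 (real q) \<ge> 0) at_top" by real_asymp
  moreover have "eventually (\<lambda>q::nat. (log 2 (real q))^2 \<le> real q powr (\<eta>/8)) at_top"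
    using assms by real_asymp
  ultimately show ?thesis by eventually_elim (simp add: max_def)
qed

lemma ev_sll:
  assumes "\<eta> > 0"
  shows "eventually (\<lambda>q::nat. sqrt (ln (ln (real q))) \<le> real q powr (\<eta>/8)) at_top"
  using assms by real_asymp

lemma ev_fact:
  "eventually (\<lambda>q::nat. 2 * (sqrt (ln (ln (real q))) powr sqrt (ln (ln (real q)))) * ln (ln (real q)) \<le> real q powr (7/8)) at_top"
  by real_asymp

lemma ev_six:
  assumes "\<eta> > 0"
  shows "eventually (\<lambda>q::nat. 6 \<le> real (q - 2) powr (3*\<eta>/8)) at_top"
proof -
  have "eventually (\<lambda>q::nat. 6 \<le> (real q - 2) powr (3*\<eta>/8)) at_top" using assms by real_asymp
  moreover have "eventually (\<lambda>q::nat. q \<ge> 2) at_top" by (rule eventually_ge_at_top)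
  ultimately show ?thesis by eventually_elim (simp add: of_nat_diff)
qed

lemma ev_lin: "eventually (\<lambda>q::nat. 2 * sqrt (ln (ln (real q))) + 4 \<le> real q - 2 \<and> (sqrt (ln (ln (real q))) + 2) * ln (ln (real q)) \<le> real q \<and> 4 * ln (ln (real q)) \<le> real q) at_top"
proof -
  have "eventually (\<lambda>q::nat. 2 * sqrt (ln (ln (real q))) + 4 \<le> real q - 2) at_top" by real_asymp
  moreover have "eventually (\<lambda>q::nat. (sqrt (ln (ln (real q))) + 2) * ln (ln (real q)) \<le> real q) at_top" by real_asymp
  moreover have "eventually (\<lambda>q::nat. 4 * ln (ln (real q)) \<le> real q) at_top" by real_asymp
  ultimately show ?thesis by eventually_elim auto
qed



lemma ev_k:
  assumes ko: "(\<lambda>q. real (k q)) \<in> o[at_top](\<lambda>q. sqrt (Log2 (real q)))" and c: "c > 0"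
  shows "eventually (\<lambda>q. real (k q) \<le> c * sqrt (ln (ln (real q)))) at_top"
  using landau_o.smallD[OF ko c] ev_Log2 ev_ll2
proof eventually_elim
  case (elim q)
  thus ?case by simp
qed

lemma xn_powr:
  fixes x n a :: real and k :: nat
  assumes "x = n + 2" "n \<ge> 1" "a \<le> real k" "2 * real k \<le> n"
  shows "x powr a \<le> 3 * n powr a"
proof -
  have n0: "n > 0" using assms by simp
  have r1: "x / n \<ge> 1" using assms by (simp add: field_simps)
  have "x powr a = (n * (x/n)) powr a" using n0 by simp
  also have "\<dots> = n powr a * (x/n) powr a" by (rule powr_mult; use n0 r1 in linarith)
  also have "(x/n) powr a \<le> (x/n) powr (real k)" using r1 assms by (intro powr_mono) auto
  hence "n powr a * (x/n) powr a \<le> n powr a * (x/n) powr (real k)" by (intro mult_left_mono) simp_all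
  also have "(x/n) powr (real k) = (1 + 2/n) ^ k" using n0 assms by (simp add: powr_realpow field_simps)
  also have "(1 + 2/n) ^ k \<le> exp (2/n) ^ k" using n0 by (intro power_mono) (auto simp: exp_ge_add_one_self add.commute)
  also have "exp (2/n) ^ k = exp (real k * (2/n))" by (rule exp_of_nat_mult[symmetric])
  also have "\<dots> \<le> exp 1" using assms n0 by (simp add: field_simps)
  also have "\<dots> \<le> 3" by (rule exp_le)
  finally show ?thesis using n0 by (simp add: mult_left_mono mult.commute)
qed

lemma core1:
  assumes kpos: "\<forall>q. k q > 0" and ko: "(\<lambda>q. real (k q)) \<in> o[at_top](\<lambda>q. sqrt (Log2 (real q)))"
    and \<eta>: "0 < \<eta>" "\<eta> \<le> 1"
  shows "eventually (\<lambda>q. real (card (depS q (k q))) \<le> 2 * real q powr (real (k q) - 3/2 + 5*\<eta>/8)) at_top"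
proof -
  define c where "c = sqrt \<eta> / 4"
  have "sqrt \<eta> \<le> 1" using \<eta> by simp
  hence s4: "sqrt \<eta> \<le> 4" by linarith
  have c: "c > 0" "c \<le> 1" "16 * c^2 \<le> \<eta>" using \<eta> s4 by (auto simp: c_def power_divide simp del: real_sqrt_le_1_iff)
  show ?thesis
    using eventually_ge_at_top[of 3] ev_ll2 ev_k[OF ko c(1)] ev_k[OF ko zero_less_one] ev_f[OF \<eta>(1)]
          ev_L[OF \<eta>(1)] ev_sll[OF \<eta>(1)]
  proof eventually_elim
    case (elim q)
    have k1: "k q \<ge> 1" using kpos by (simp add: Suc_le_eq)
    have kq: "real (k q) \<le> real q powr (\<eta>/8)" using elim(4,7) by simp
    show ?case
      by (rule core_point[OF elim(1) elim(2) k1 elim(3) _ c(2,3) \<eta>(1) elim(5) elim(6) kq]) (use c in simp)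
  qed
qed

lemma core2:
  assumes kpos: "\<forall>q. k q > 0" and ko: "(\<lambda>q. real (k q)) \<in> o[at_top](\<lambda>q. sqrt (Log2 (real q)))"
    and \<eta>: "0 < \<eta>" "\<eta> \<le> 1"
  shows "eventually (\<lambda>q. real (card (depS q (k q))) \<le> real (q-2) powr (real (k q) - 3/2 + \<eta>)) at_top"
  using core1[OF kpos ko \<eta>] eventually_ge_at_top[of 3] ev_six[OF \<eta>(1)] ev_lin ev_k[OF ko zero_less_one]
proof eventually_elim
  case (elim q)
  define n where "n = real (q-2)"
  define a where "a = real (k q) - 3/2 + 5*\<eta>/8"
  have xn: "real q = n + 2" "n \<ge> 1" using elim(2) by (auto simp: n_def of_nat_diff)
  have "2 * real (k q) \<le> n" using elim(4,5) xn by simp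
  hence "real q powr a \<le> 3 * n powr a" using xn \<eta> by (intro xn_powr[where k = "k q"]) (auto simp: a_def)
  hence "real (card (depS q (k q))) \<le> 6 * n powr a" using elim(1) by (simp add: a_def)
  also have "\<dots> \<le> n powr (3*\<eta>/8) * n powr a" using elim(3) by (intro mult_right_mono) (auto simp: n_def)
  also have "\<dots> = n powr (real (k q) - 3/2 + \<eta>)" by (simp add: powr_add[symmetric] a_def algebra_simps)
  finally show ?case by (simp add: n_def)
qed



lemma count_eq:
  "card {S. S \<subseteq> {2..<q} \<and> card S = k \<and> mult_indep S} + card (depS q k) = (q-2) choose k"
proof -
  have "{S. S \<subseteq> {2..<q} \<and> card S = k} = {S. S \<subseteq> {2..<q} \<and> card S = k \<and> mult_indep S} \<union> depS q k"
    by (auto simp: depS_def)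
  moreover have "card {S. S \<subseteq> {2..<q} \<and> card S = k} = (q-2) choose k"
    by (subst n_subsets) auto
  moreover have "card ({S. S \<subseteq> {2..<q} \<and> card S = k \<and> mult_indep S} \<union> depS q k) =
      card {S. S \<subseteq> {2..<q} \<and> card S = k \<and> mult_indep S} + card (depS q k)"
    by (rule card_Un_disjoint) (auto simp: depS_def)
  ultimately show ?thesis by simp
qed

lemma binom_point:
  fixes q k :: nat and Lg :: real
  assumes k1: "k \<ge> 1" and Lg: "Lg > 0" and kx: "real k + 2 \<le> real q" and kL: "(real k + 2) * Lg \<le> real q"
  shows "\<bar>real ((q-2) choose k) - real q ^ k / fact k\<bar> \<le> real q ^ k / (fact (k-1) * Lg)"
proof -
  define x where "x = real q"
  have x0: "x > 0" using kx by (simp add: x_def)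
  have q2: "q \<ge> 2" using kx by simp
  have F: "(fact k :: real) = real k * fact (k-1)" using k1 by (simp add: fact_reduce)
  have Fpos: "(fact k :: real) > 0" by simp
  have up: "real ((q-2) choose k) * fact k \<le> x ^ k"
  proof -
    have "((q-2) choose k) * fact k \<le> (q-2)^k" by (rule binomial_fact_pow)
    hence "real (((q-2) choose k) * fact k) \<le> real ((q-2)^k)" by (rule of_nat_mono)
    hence "real ((q-2) choose k) * fact k \<le> real (q-2) ^ k" by simp
    also have "\<dots> \<le> x ^ k" unfolding x_def by (intro power_mono) auto
    finally show ?thesis .
  qed
  have low: "real ((q-2) choose k) * fact k \<ge> x ^ k * (1 - real k * (real k + 2) / x)"
  proof -
    have "real ((q-2) choose k) * fact k = (\<Prod>i = 0..<k. real (q-2) - real i)"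
      by (simp add: binomial_gbinomial gbinomial_mult_fact')
    also have "\<dots> \<ge> (\<Prod>i = 0..<k. x - 2 - real k)"
    proof (intro prod_mono conjI)
      fix i assume "i \<in> {0..<k}"
      thus "0 \<le> x - 2 - real k" "x - 2 - real k \<le> real (q-2) - real i"
        using kx q2 by (auto simp: x_def of_nat_diff)
    qed
    also have "(\<Prod>i = 0..<k. x - 2 - real k) = (x - 2 - real k) ^ k" by simp
    also have "(x - 2 - real k) = x * (1 + (- ((real k + 2) / x)))" using x0 by (simp add: field_simps)
    also have "(x * (1 + (- ((real k + 2) / x)))) ^ k = x^k * (1 + (- ((real k + 2) / x))) ^ k"
      by (simp add: power_mult_distrib)
    also have "(1 + (- ((real k + 2) / x))) ^ k \<ge> 1 + real k * (- ((real k + 2) / x))"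
      by (rule Bernoulli_inequality) (use kx x0 in \<open>simp add: x_def field_simps\<close>)
    hence "x^k * (1 + (- ((real k + 2) / x))) ^ k \<ge> x^k * (1 + real k * (- ((real k + 2) / x)))"
      using x0 by (intro mult_left_mono) auto
    finally show ?thesis by (simp add: field_simps)
  qed
  have "real ((q-2) choose k) \<le> x^k / fact k" using up Fpos by (simp add: field_simps)
  moreover have "x^k / fact k - real ((q-2) choose k) \<le> x^k / (fact (k-1) * Lg)"
  proof -
    have "x^k / fact k - real ((q-2) choose k) \<le> x^k / fact k - x ^ k * (1 - real k * (real k + 2) / x) / fact k"
    proof -
      have "x ^ k * (1 - real k * (real k + 2) / x) / fact k \<le> real ((q-2) choose k)"
        using low by (subst pos_divide_le_eq[OF Fpos])
      thus ?thesis by linarith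
    qed
    also have "\<dots> = x^k * (real k * (real k + 2) / x) / fact k" by (simp add: field_simps)
    also have "\<dots> = x^k * ((real k + 2) / x) / fact (k-1)"
    proof -
      have "real k > 0" using k1 by simp
      thus ?thesis using F x0 by (simp add: field_simps)
    qed
    also have "\<dots> \<le> x^k * (1 / Lg) / fact (k-1)"
    proof (intro divide_right_mono mult_left_mono)
      show "(real k + 2) / x \<le> 1 / Lg" using kL Lg x0 by (simp add: field_simps x_def)
    qed (use x0 in auto)
    also have "\<dots> = x^k / (fact (k-1) * Lg)" by simp
    finally show ?thesis .
  qed
  ultimately show ?thesis by (simp add: x_def abs_if)
qed

lemma fact_le_s:
  fixes s :: real
  assumes "real k \<le> s" "s \<ge> 1"
  shows "(fact (k-1) :: real) \<le> s powr s"
proof -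
  have "(fact (k-1) :: real) \<le> fact k" by (intro fact_mono) auto
  also have "\<dots> \<le> real (k ^ k)" by (rule fact_le_power)
  also have "\<dots> = real k ^ k" by simp
  also have "\<dots> \<le> s ^ k" using assms by (intro power_mono) auto
  also have "\<dots> = s powr real k" using assms by (simp add: powr_realpow)
  also have "\<dots> \<le> s powr s" using assms by (intro powr_mono) auto
  finally show ?thesis .
qed



lemma dep_le_target:
  fixes q k :: nat and d x ll :: real
  assumes x: "x = real q" "x > 1" and ll: "ll \<ge> 2" and kk: "real k \<le> sqrt ll"
    and d: "d \<le> 2 * x powr (real k - 3/2 + 5*1/8)"
    and fct: "2 * (sqrt ll powr sqrt ll) * ll \<le> x powr (7/8)"
  shows "d \<le> x ^ k / (fact (k-1) * ll)"
proof -
  have s1: "sqrt ll \<ge> 1" using ll by simp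
  have F: "(fact (k-1) :: real) \<le> sqrt ll powr sqrt ll" by (rule fact_le_s[OF kk s1])
  have Fp: "(fact (k-1) :: real) > 0" by simp
  have llp: "ll > 0" using ll by simp
  have "d * (fact (k-1) * ll) \<le> (2 * x powr (real k - 7/8)) * (sqrt ll powr sqrt ll * ll)"
    using d F llp Fp by (intro mult_mono) auto
  also have "\<dots> = x powr (real k - 7/8) * (2 * (sqrt ll powr sqrt ll) * ll)" by (simp add: mult_ac)
  also have "\<dots> \<le> x powr (real k - 7/8) * x powr (7/8)" using fct by (intro mult_left_mono) auto
  also have "\<dots> = x powr real k" by (simp add: powr_add[symmetric])
  also have "\<dots> = x ^ k" using x by (simp add: powr_realpow)
  finally show ?thesis using Fp llp by (simp add: field_simps)
qed

theorem theorem1p3: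
  shows "\<exists>N :: nat \<Rightarrow> nat set.
    (\<forall>q. N q \<subseteq> {2..<q}) \<and>
    (\<exists>C < 1. \<forall>\<^sub>F q in at_top.
        \<bar>real (card (N q)) - real q\<bar> \<le> C * real q / Log2 (real q)) \<and>
    (\<forall>k :: nat \<Rightarrow> nat.
       (\<forall>q. k q > 0) \<longrightarrow>
       (\<lambda>q. real (k q)) \<in> o[at_top](\<lambda>q. sqrt (Log2 (real q))) \<longrightarrow>
       (\<exists>\<epsilon> :: nat \<Rightarrow> real. (\<epsilon> \<longlongrightarrow> 0) at_top \<and>
          (\<lambda>q. real (card {S. S \<subseteq> N q \<and> card S = k q \<and> mult_indep S})
                - real (card (N q) choose k q))
          \<in> O[at_top](\<lambda>q. real (card (N q)) powr (real (k q) - 3/2 + \<epsilon> q))) \<and>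
       (\<lambda>q. real (card {S. S \<subseteq> N q \<and> card S = k q \<and> mult_indep S})
             - real q ^ k q / fact (k q))
          \<in> O[at_top](\<lambda>q. real q ^ k q / (fact (k q - 1) * Log2 (real q))))"
proof (intro exI[of _ "\<lambda>q::nat. {2..<q}"] conjI allI impI)
  show "\<And>q. {2..<q} \<subseteq> {2..<q}" by simp
  show "\<exists>C<1. \<forall>\<^sub>F q in at_top. \<bar>real (card {2..<q}) - real q\<bar> \<le> C * real q / Log2 (real q)"
  proof (intro exI[of _ "1/2"] conjI)
    show "eventually (\<lambda>q. \<bar>real (card {2..<q}) - real q\<bar> \<le> 1/2 * real q / Log2 (real q)) at_top"
      using eventually_ge_at_top[of 2] ev_Log2 ev_ll2 ev_lin
    proof eventually_elim
      case (elim q)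
      have "\<bar>real (card {2..<q}) - real q\<bar> = 2" using elim(1) by (simp add: of_nat_diff)
      also have "2 \<le> 1/2 * real q / Log2 (real q)"
      proof -
        have lp: "Log2 (real q) > 0" using elim(2,3) by simp
        have "4 * Log2 (real q) \<le> real q" using elim by simp
        thus ?thesis using lp by (simp add: le_divide_eq)
      qed
      finally show ?case .
    qed
  qed simp
next
  fix k :: "nat \<Rightarrow> nat"
  assume kpos: "\<forall>q. k q > 0" and ko: "(\<lambda>q. real (k q)) \<in> o[at_top](\<lambda>q. sqrt (Log2 (real q)))"
  define dep where "dep q = card (depS q (k q))" for q
  define n where "n q = real (q - 2)" for q
  define \<epsilon> where "\<epsilon> q = (if 4 \<le> q \<and> 0 < dep q then max 0 ((ln (real (dep q)) - (real (k q) - 3/2) * ln (n q)) / ln (n q)) else 0)" for q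
  have cnt: "real (card {S. S \<subseteq> {2..<q} \<and> card S = k q \<and> mult_indep S}) = real ((q-2) choose k q) - real (dep q)" for q
    using count_eq[of q "k q"] unfolding dep_def by (metis add_diff_cancel_right' of_nat_add diff_add_cancel)
  have e0: "\<epsilon> q \<ge> 0" for q by (simp add: \<epsilon>_def)
  have nq: "4 \<le> q \<Longrightarrow> n q \<ge> 2" for q by (simp add: n_def of_nat_diff)
  show "\<exists>\<epsilon> :: nat \<Rightarrow> real. (\<epsilon> \<longlongrightarrow> 0) at_top \<and>
          (\<lambda>q. real (card {S. S \<subseteq> {2..<q} \<and> card S = k q \<and> mult_indep S})
                - real (card {2..<q} choose k q))
          \<in> O[at_top](\<lambda>q. real (card {2..<q}) powr (real (k q) - 3/2 + \<epsilon> q))"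
  proof (intro exI[of _ \<epsilon>] conjI)
    show "(\<epsilon> \<longlongrightarrow> 0) at_top"
    proof (rule tendstoI)
      fix e :: real assume e: "e > 0"
      define \<eta> where "\<eta> = min e 1 / 2"
      have \<eta>: "0 < \<eta>" "\<eta> \<le> 1" "\<eta> < e" using e by (auto simp: \<eta>_def)
      show "eventually (\<lambda>q. dist (\<epsilon> q) 0 < e) at_top"
        using core2[OF kpos ko \<eta>(1,2)] eventually_ge_at_top[of 4]
      proof eventually_elim
        case (elim q)
        show ?case
        proof (cases "0 < dep q")
          case True
          have n2: "n q \<ge> 2" using nq elim(2) by simp
          have lnp: "ln (n q) > 0" using n2 by simp
          have "real (dep q) \<le> n q powr (real (k q) - 3/2 + \<eta>)" using elim(1) by (simp add: dep_def n_def)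
          hence "ln (real (dep q)) \<le> ln (n q powr (real (k q) - 3/2 + \<eta>))"
            by (subst ln_le_cancel_iff) (use True n2 in auto)
          also have "\<dots> = (real (k q) - 3/2 + \<eta>) * ln (n q)" using n2 by (simp add: ln_powr)
          finally have "(ln (real (dep q)) - (real (k q) - 3/2) * ln (n q)) / ln (n q) \<le> \<eta>"
            using lnp by (simp add: divide_le_eq algebra_simps)
          hence "\<epsilon> q \<le> \<eta>" using True elim(2) \<eta> by (simp add: \<epsilon>_def)
          thus ?thesis using e0[of q] \<eta> by simp
        next
          case False
          thus ?thesis using e by (simp add: \<epsilon>_def)
        qed
      qed
    qed
    show "(\<lambda>q. real (card {S. S \<subseteq> {2..<q} \<and> card S = k q \<and> mult_indep S})
                - real (card {2..<q} choose k q))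
          \<in> O[at_top](\<lambda>q. real (card {2..<q}) powr (real (k q) - 3/2 + \<epsilon> q))"
    proof (rule bigoI[of _ 1])
      show "eventually (\<lambda>q. norm (real (card {S. S \<subseteq> {2..<q} \<and> card S = k q \<and> mult_indep S})
                - real (card {2..<q} choose k q)) \<le> 1 * norm (real (card {2..<q}) powr (real (k q) - 3/2 + \<epsilon> q))) at_top"
        using eventually_ge_at_top[of 4]
      proof eventually_elim
        case (elim q)
        have n2: "n q \<ge> 2" using nq elim by simp
        have lnp: "ln (n q) > 0" using n2 by simp
        have "real (dep q) \<le> n q powr (real (k q) - 3/2 + \<epsilon> q)"
        proof (cases "0 < dep q")
          case True
          have "(ln (real (dep q)) - (real (k q) - 3/2) * ln (n q)) / ln (n q) \<le> \<epsilon> q"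
            using True elim by (simp add: \<epsilon>_def)
          hence "ln (real (dep q)) \<le> (real (k q) - 3/2 + \<epsilon> q) * ln (n q)"
            using lnp by (simp add: divide_le_eq algebra_simps)
          hence "exp (ln (real (dep q))) \<le> exp ((real (k q) - 3/2 + \<epsilon> q) * ln (n q))" by simp
          thus ?thesis using True n2 by (simp add: powr_def mult.commute)
        qed simp
        thus ?case using cnt[of q] by (simp add: n_def)
      qed
    qed
  qed
  show "(\<lambda>q. real (card {S. S \<subseteq> {2..<q} \<and> card S = k q \<and> mult_indep S})
             - real q ^ k q / fact (k q))
          \<in> O[at_top](\<lambda>q. real q ^ k q / (fact (k q - 1) * Log2 (real q)))"
  proof (rule bigoI[of _ 2])
    show "eventually (\<lambda>q. norm (real (card {S. S \<subseteq> {2..<q} \<and> card S = k q \<and> mult_indep S})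
             - real q ^ k q / fact (k q)) \<le> 2 * norm (real q ^ k q / (fact (k q - 1) * Log2 (real q)))) at_top"
      using eventually_ge_at_top[of 3] ev_Log2 ev_ll2 core1[OF kpos ko zero_less_one order_refl]
            ev_k[OF ko zero_less_one] ev_lin ev_fact
    proof eventually_elim
      case (elim q)
      define x where "x = real q"
      define ll where "ll = ln (ln (real q))"
      have x1: "x > 1" using elim(1) by (simp add: x_def)
      have ll2: "ll \<ge> 2" using elim(3) by (simp add: ll_def)
      have kk: "real (k q) \<le> sqrt ll" using elim(5) by (simp add: ll_def)
      have k1: "k q \<ge> 1" using kpos by (simp add: Suc_le_eq)
      have s0: "sqrt ll \<ge> 0" using ll2 by simp
      have kx: "real (k q) + 2 \<le> real q" using elim(6) kk s0 by (simp add: ll_def)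
      have kL: "(real (k q) + 2) * ll \<le> real q"
      proof -
        have "(real (k q) + 2) * ll \<le> (sqrt ll + 2) * ll" using kk ll2 by (intro mult_right_mono) auto
        thus ?thesis using elim(6) by (simp add: ll_def)
      qed
      have B: "\<bar>real ((q-2) choose k q) - x ^ k q / fact (k q)\<bar> \<le> x ^ k q / (fact (k q - 1) * ll)"
        using binom_point[OF k1 _ kx kL] ll2 by (simp add: x_def)
      have D: "real (dep q) \<le> x ^ k q / (fact (k q - 1) * ll)"
        by (rule dep_le_target[OF _ x1 ll2 kk]) (use elim(4,7) in \<open>simp_all add: x_def ll_def dep_def\<close>)
      have "\<bar>real (card {S. S \<subseteq> {2..<q} \<and> card S = k q \<and> mult_indep S}) - x ^ k q / fact (k q)\<bar>
            = \<bar>(real ((q-2) choose k q) - x ^ k q / fact (k q)) - real (dep q)\<bar>" using cnt[of q] by simp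
      also have "\<dots> \<le> \<bar>real ((q-2) choose k q) - x ^ k q / fact (k q)\<bar> + real (dep q)" by simp
      also have "\<dots> \<le> 2 * (x ^ k q / (fact (k q - 1) * ll))" using B D by simp
      also have "\<dots> = 2 * norm (real q ^ k q / (fact (k q - 1) * Log2 (real q)))"
      proof -
        have pp: "(fact (k q - 1) :: real) * ll > 0" using ll2 by simp
        have "norm (real q ^ k q / (fact (k q - 1) * Log2 (real q))) = x ^ k q / (fact (k q - 1) * ll)"
          using elim(2) x1 pp by (simp add: x_def ll_def abs_of_pos)
        thus ?thesis by simp
      qed
      finally show ?case by (simp add: x_def)
    qed
  qed
qed


end
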